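(* Let $\beta\in(0,\infty)$, $\gamma>0$, and for each $N\ge1$ let $K=K_N$ be a positive integer with $K_N/N\to\beta$. Let $\boldsymbol{S}\in\mathbb{R}^{N\times K}$ be a random time-hopping matrix with $N_{\mathsf s}=1$: its columns are independent, $\boldsymbol{s}_k=\epsilon_k\boldsymbol{e}_{\pi_k}$ with $\pi_k$ uniform on $\{1,\dots,N\}$ and $\epsilon_k$ uniform on $\{-1,+1\}$, all independent. Let \[ C^{\mathsf{opt}}_N(\gamma):=\frac1N\log_2\det\big(\boldsymbol{I}+\gamma\,\boldsymbol{S}\boldsymbol{S}^{\mathsf T}\big). \] Then, as $N\to\infty$, \[ C^{\mathsf{opt}}_N(\gamma)\ \xrightarrow{p}\ \sum_{k\ge0}\frac{\beta^k e^{-\beta}}{k!}\log_2(1+k\gamma). \]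
   Context: $\boldsymbol{e}_i$ denotes the $i$th standard basis vector of $\mathbb{R}^N$; $\xrightarrow{p}$ denotes convergence in probability. $C^{\mathsf{opt}}_N(\gamma)$ is the spectral efficiency (bits/s/Hz) of the channel $\boldsymbol{y}=\boldsymbol{S}\boldsymbol{b}+\boldsymbol{n}$ with optimum decoding at signal-to-noise ratio $\gamma$. *)

theory Defs
  imports "HOL-Probability.Product_PMF" "Jordan_Normal_Form.Determinant"
begin

text \<open>Random time-hopping matrix with N_s = 1.  A sample is a function assigning to
  each column index k < K a pair (pi_k, eps_k) with pi_k uniform on {0..<N}
  (0-based rows) and eps_k uniform on {-1,+1}, all independent.\<close>

definition th_sample_pmf :: "nat \<Rightarrow> nat \<Rightarrow> (nat \<Rightarrow> nat \<times> real) pmf" where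
  "th_sample_pmf N K =
     Pi_pmf {..<K} (0, 1) (\<lambda>_. pair_pmf (pmf_of_set {..<N}) (pmf_of_set {-1, 1}))"

definition th_matrix :: "nat \<Rightarrow> nat \<Rightarrow> (nat \<Rightarrow> nat \<times> real) \<Rightarrow> real mat" where
  "th_matrix N K \<omega> = mat N K (\<lambda>(i, k). if i = fst (\<omega> k) then snd (\<omega> k) else 0)"

definition C_opt :: "nat \<Rightarrow> nat \<Rightarrow> real \<Rightarrow> (nat \<Rightarrow> nat \<times> real) \<Rightarrow> real" where
  "C_opt N K \<gamma> \<omega> =
     (let S = th_matrix N K \<omega> in
      log 2 (det (1\<^sub>m N + \<gamma> \<cdot>\<^sub>m (S * transpose_mat S))) / real N)"

end

theory Submission
  imports Defs
begin


lemma E_fin: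
  fixes H :: "'a \<Rightarrow> real"
  assumes "finite (set_pmf M)"
  shows "measure_pmf.expectation M H = (\<Sum>s\<in>set_pmf M. pmf M s * H s)"
  using assms by (subst integral_measure_pmf_real[where A="set_pmf M"]) (auto simp: mult.commute)

lemma E_pair_fin:
  fixes H :: "'a \<times> 'b \<Rightarrow> real"
  assumes "finite (set_pmf P)" "finite (set_pmf Q)"
  shows "measure_pmf.expectation (pair_pmf P Q) H =
     (\<Sum>y\<in>set_pmf P. pmf P y * (\<Sum>f\<in>set_pmf Q. pmf Q f * H (y, f)))"
proof -
  have "measure_pmf.expectation (pair_pmf P Q) H = (\<Sum>s\<in>set_pmf P \<times> set_pmf Q. pmf (pair_pmf P Q) s * H s)"
    using assms by (subst E_fin) auto
  also have "\<dots> = (\<Sum>y\<in>set_pmf P. \<Sum>f\<in>set_pmf Q. pmf P y * (pmf Q f * H (y, f)))"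
    unfolding sum.cartesian_product by (intro sum.cong) (auto simp: pmf_pair)
  also have "\<dots> = (\<Sum>y\<in>set_pmf P. pmf P y * (\<Sum>f\<in>set_pmf Q. pmf Q f * H (y, f)))"
    by (simp add: sum_distrib_left)
  finally show ?thesis .
qed

lemma sum_pmf1: "finite (set_pmf M) \<Longrightarrow> (\<Sum>s\<in>set_pmf M. pmf M s) = 1"
  by (rule sum_pmf_eq_1) auto

lemma E_le_const:
  fixes H :: "'a \<Rightarrow> real"
  assumes "finite (set_pmf M)" "\<And>s. s \<in> set_pmf M \<Longrightarrow> H s \<le> c"
  shows "measure_pmf.expectation M H \<le> c"
proof -
  have "(\<Sum>s\<in>set_pmf M. pmf M s * H s) \<le> (\<Sum>s\<in>set_pmf M. pmf M s * c)"
    by (intro sum_mono mult_left_mono assms) auto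
  also have "\<dots> = c" using sum_pmf1[OF assms(1)] by (simp add: sum_distrib_right[symmetric])
  finally show ?thesis using assms by (simp add: E_fin)
qed

lemma total_var_pair:
  fixes G :: "'a \<times> 'b \<Rightarrow> real"
  assumes P: "finite (set_pmf P)" and Q: "finite (set_pmf Q)"
  defines "h \<equiv> (\<lambda>y. measure_pmf.expectation Q (\<lambda>f. G (y, f)))"
  defines "\<mu> \<equiv> measure_pmf.expectation (pair_pmf P Q) G"
  shows "measure_pmf.expectation (pair_pmf P Q) (\<lambda>z. (G z - \<mu>)^2) =
     measure_pmf.expectation P (\<lambda>y. measure_pmf.expectation Q (\<lambda>f. (G (y, f) - h y)^2))
     + measure_pmf.expectation P (\<lambda>y. (h y - \<mu>)^2)"
proof -
  have inner: "(\<Sum>f\<in>set_pmf Q. pmf Q f * (G (y, f) - \<mu>)^2) =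
      (\<Sum>f\<in>set_pmf Q. pmf Q f * (G (y, f) - h y)^2) + (h y - \<mu>)^2" for y
  proof -
    have hy: "h y = (\<Sum>f\<in>set_pmf Q. pmf Q f * G (y, f))" unfolding h_def using Q by (simp add: E_fin)
    have s1: "(\<Sum>f\<in>set_pmf Q. pmf Q f) = 1" using sum_pmf1[OF Q] .
    have "(\<Sum>f\<in>set_pmf Q. pmf Q f * (G (y, f) - \<mu>)^2) =
       (\<Sum>f\<in>set_pmf Q. pmf Q f * (G (y, f) - h y)^2 + 2 * (h y - \<mu>) * (pmf Q f * G (y, f))
          - 2 * (h y - \<mu>) * h y * pmf Q f + (h y - \<mu>)^2 * pmf Q f)"
      by (intro sum.cong refl) (simp add: power2_eq_square algebra_simps)
    also have "\<dots> = (\<Sum>f\<in>set_pmf Q. pmf Q f * (G (y, f) - h y)^2) + 2 * (h y - \<mu>) * h y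
          - 2 * (h y - \<mu>) * h y * 1 + (h y - \<mu>)^2 * 1"
      unfolding sum.distrib sum_subtractf s1[symmetric] sum_distrib_left[symmetric] hy[symmetric] by simp
    finally show ?thesis by simp
  qed
  have "measure_pmf.expectation (pair_pmf P Q) (\<lambda>z. (G z - \<mu>)^2) =
     (\<Sum>y\<in>set_pmf P. pmf P y * (\<Sum>f\<in>set_pmf Q. pmf Q f * (G (y, f) - \<mu>)^2))"
    using P Q by (simp add: E_pair_fin)
  also have "\<dots> = (\<Sum>y\<in>set_pmf P. pmf P y * (\<Sum>f\<in>set_pmf Q. pmf Q f * (G (y, f) - h y)^2))
     + (\<Sum>y\<in>set_pmf P. pmf P y * (h y - \<mu>)^2)"
    unfolding inner by (simp add: distrib_left sum.distrib)
  finally show ?thesis using P Q by (simp add: E_fin)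
qed

lemma E_abs_le:
  fixes H :: "'a \<Rightarrow> real"
  assumes "finite (set_pmf M)" "\<And>s. s \<in> set_pmf M \<Longrightarrow> \<bar>H s\<bar> \<le> c"
  shows "\<bar>measure_pmf.expectation M H\<bar> \<le> c"
proof -
  have "\<bar>\<Sum>s\<in>set_pmf M. pmf M s * H s\<bar> \<le> (\<Sum>s\<in>set_pmf M. \<bar>pmf M s * H s\<bar>)"
    by (rule sum_abs)
  also have "\<dots> \<le> (\<Sum>s\<in>set_pmf M. pmf M s * c)"
    by (intro sum_mono) (auto simp: abs_mult intro!: mult_left_mono assms)
  also have "\<dots> = c" using sum_pmf1[OF assms(1)] by (simp add: sum_distrib_right[symmetric])
  finally show ?thesis using assms by (simp add: E_fin)
qed

lemma finite_set_Pi_pmf: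
  assumes "finite A" "\<And>x. finite (set_pmf (p x))"
  shows "finite (set_pmf (Pi_pmf A d p))"
  using assms by (subst set_Pi_pmf) auto

lemma bd_var:
  fixes F :: "('a \<Rightarrow> 'b) \<Rightarrow> real"
  assumes "finite A" "\<And>x. finite (set_pmf (p x))"
    and "\<And>w k y. k \<in> A \<Longrightarrow> \<bar>F (w(k:=y)) - F w\<bar> \<le> c"
  shows "measure_pmf.expectation (Pi_pmf A d p)
           (\<lambda>w. (F w - measure_pmf.expectation (Pi_pmf A d p) F)^2) \<le> real (card A) * c^2"
  using assms(1,3)
proof (induction A arbitrary: F rule: finite_induct)
  case empty
  then show ?case by simp
next
  case (insert x A F)
  define P where "P = p x"
  define Q where "Q = Pi_pmf A d p"
  have fP: "finite (set_pmf P)" unfolding P_def using assms(2) .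
  have fQ: "finite (set_pmf Q)" unfolding Q_def using finite_set_Pi_pmf[OF insert(1) assms(2)] .
  define G where "G = (\<lambda>z::'b \<times> ('a \<Rightarrow> 'b). F ((snd z)(x := fst z)))"
  define h where "h = (\<lambda>y. measure_pmf.expectation Q (\<lambda>f. G (y, f)))"
  define \<mu> where "\<mu> = measure_pmf.expectation (pair_pmf P Q) G"
  have M: "Pi_pmf (insert x A) d p = map_pmf (\<lambda>z. (snd z)(x := fst z)) (pair_pmf P Q)"
    unfolding P_def Q_def by (subst Pi_pmf_insert[OF insert(1,2)]) (simp add: case_prod_beta')
  have lhs: "measure_pmf.expectation (Pi_pmf (insert x A) d p)
           (\<lambda>w. (F w - measure_pmf.expectation (Pi_pmf (insert x A) d p) F)^2)
      = measure_pmf.expectation (pair_pmf P Q) (\<lambda>z. (G z - \<mu>)^2)"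
    unfolding M \<mu>_def G_def by simp
  have t1: "measure_pmf.expectation Q (\<lambda>f. (G (y, f) - h y)^2) \<le> real (card A) * c^2" for y
  proof -
    have "measure_pmf.expectation Q (\<lambda>f. ((\<lambda>f. F (f(x:=y))) f - measure_pmf.expectation Q (\<lambda>f. F (f(x:=y))))^2)
       \<le> real (card A) * c^2"
      unfolding Q_def
    proof (rule insert.IH)
      fix w k z assume k: "k \<in> A"
      with insert(2) have "k \<noteq> x" by auto
      hence eq: "(w(k:=z))(x:=y) = (w(x:=y))(k:=z)" by (rule fun_upd_twist)
      show "\<bar>F ((w(k:=z))(x:=y)) - F (w(x:=y))\<bar> \<le> c" unfolding eq using k by (intro insert(4)) simp
    qed
    thus ?thesis unfolding h_def G_def by simp
  qed
  have hdiff: "\<bar>h y - h y'\<bar> \<le> c" for y y'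
  proof -
    have "h y - h y' = measure_pmf.expectation Q (\<lambda>f. G (y, f) - G (y', f))"
      unfolding h_def using fQ by (simp add: E_fin sum_subtractf right_diff_distrib)
    also have "\<bar>\<dots>\<bar> \<le> c"
    proof (rule E_abs_le[OF fQ])
      fix f
      have eq: "f(x := y) = (f(x := y'))(x := y)" by simp
      have "\<bar>F ((f(x := y'))(x := y)) - F (f(x := y'))\<bar> \<le> c" by (intro insert(4)) simp
      thus "\<bar>G (y, f) - G (y', f)\<bar> \<le> c" unfolding G_def by (simp only: eq fst_conv snd_conv)
    qed
    finally show ?thesis .
  qed
  have t2: "(h y - \<mu>)^2 \<le> c^2" for y
  proof -
    have "\<mu> = measure_pmf.expectation P h"
      unfolding \<mu>_def h_def by (simp add: E_pair_fin[OF fP fQ] E_fin[OF fP] E_fin[OF fQ])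
    hence "h y - \<mu> = measure_pmf.expectation P (\<lambda>y'. h y - h y')"
      using fP by (simp add: E_fin sum_subtractf right_diff_distrib sum_distrib_right[symmetric] sum_pmf1)
    also have "\<bar>\<dots>\<bar> \<le> c" by (rule E_abs_le[OF fP hdiff])
    finally have "\<bar>h y - \<mu>\<bar> \<le> \<bar>c\<bar>" by simp
    thus ?thesis by (simp add: abs_le_square_iff)
  qed
  have "measure_pmf.expectation (pair_pmf P Q) (\<lambda>z. (G z - \<mu>)^2) =
     measure_pmf.expectation P (\<lambda>y. measure_pmf.expectation Q (\<lambda>f. (G (y, f) - h y)^2))
     + measure_pmf.expectation P (\<lambda>y. (h y - \<mu>)^2)"
    unfolding h_def \<mu>_def by (rule total_var_pair[OF fP fQ])
  also have "\<dots> \<le> real (card A) * c^2 + c^2"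
    by (intro add_mono E_le_const[OF fP] t1 t2)
  finally show ?case using lhs insert(1,2) by (simp add: algebra_simps)
qed



lemma choose_real_prod: "real (n choose k) = (\<Prod>i=0..<k. real n - real i) / fact k"
  by (simp add: binomial_gbinomial gbinomial_prod_rev)

lemma choose_le_pow_fact: "real (n choose k) \<le> real n ^ k / fact k"
proof (cases "k \<le> n")
  case True
  have "(\<Prod>i=0..<k. real n - real i) \<le> (\<Prod>i=0..<k. real n)"
    using True by (intro prod_mono) auto
  thus ?thesis by (simp add: choose_real_prod divide_right_mono)
next
  case False thus ?thesis by (simp add: binomial_eq_0)
qed

lemma pow_one_minus_inv_lim:
  fixes K :: "nat \<Rightarrow> nat" and \<beta> :: real
  assumes "(\<lambda>N. real (K N) / real N) \<longlonglongrightarrow> \<beta>"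
  shows "(\<lambda>N. (1 - 1 / real N) ^ K N) \<longlonglongrightarrow> exp (- \<beta>)"
proof -
  have "(\<lambda>N. (1 + (-1) / real N) ^ N) \<longlonglongrightarrow> exp (-1)"
    by (rule tendsto_exp_limit_sequentially)
  hence "(\<lambda>N. ln ((1 + (-1) / real N) ^ N)) \<longlonglongrightarrow> ln (exp (-1))"
    by (intro tendsto_ln) auto
  hence l1: "(\<lambda>N. ln ((1 - 1 / real N) ^ N)) \<longlonglongrightarrow> -1" by simp
  have "(\<lambda>N. exp (real (K N) / real N * ln ((1 - 1 / real N) ^ N))) \<longlonglongrightarrow> exp (\<beta> * (-1))"
    by (intro tendsto_intros assms l1)
  moreover have "eventually (\<lambda>N. exp (real (K N) / real N * ln ((1 - 1 / real N) ^ N)) =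
                    (1 - 1 / real N) ^ K N) sequentially"
    using eventually_ge_at_top[of 2]
  proof eventually_elim
    case (elim N)
    have pos: "1 - 1 / real N > 0" using elim by (simp add: field_simps)
    have "real (K N) / real N * ln ((1 - 1 / real N) ^ N) = real (K N) * ln (1 - 1 / real N)"
      using elim by (simp add: ln_realpow)
    also have "\<dots> = ln ((1 - 1 / real N) ^ K N)" by (simp add: ln_realpow)
    finally show ?case using pos by simp
  qed
  ultimately show ?thesis by (simp add: tendsto_cong)
qed

lemma binom_term_lim:
  fixes K :: "nat \<Rightarrow> nat" and \<beta> :: real
  assumes "(\<lambda>N. real (K N) / real N) \<longlonglongrightarrow> \<beta>" and bpos: "\<beta> > 0"
  shows "(\<lambda>N. real (K N choose k) * (1 / real N) ^ k * (1 - 1 / real N) ^ (K N - k))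
          \<longlonglongrightarrow> \<beta> ^ k / fact k * exp (- \<beta>)"
proof -
  have inv0: "(\<lambda>N. 1 / real N) \<longlonglongrightarrow> 0"
    by (simp add: lim_inverse_n')
  have "(\<lambda>N. \<Prod>i=0..<k. real (K N) / real N - real i * (1 / real N)) \<longlonglongrightarrow> (\<Prod>i=0..<k. \<beta> - real i * 0)"
    by (intro tendsto_intros assms inv0)
  hence p0: "(\<lambda>N. \<Prod>i=0..<k. real (K N) / real N - real i / real N) \<longlonglongrightarrow> \<beta> ^ k"
    by simp
  have p: "(\<lambda>N. (\<Prod>i=0..<k. real (K N) - real i) * (1 / real N) ^ k) \<longlonglongrightarrow> \<beta> ^ k"
  proof (rule Lim_transform_eventually[OF p0])
    show "\<forall>\<^sub>F N in sequentially. (\<Prod>i=0..<k. real (K N) / real N - real i / real N) =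
            (\<Prod>i=0..<k. real (K N) - real i) * (1 / real N) ^ k"
      using eventually_ge_at_top[of 1]
    proof eventually_elim
      case (elim N)
      have "(\<Prod>i=0..<k. real (K N) / real N - real i / real N) = (\<Prod>i=0..<k. (real (K N) - real i) * (1 / real N))"
        by (intro prod.cong) (auto simp: diff_divide_distrib)
      also have "\<dots> = (\<Prod>i=0..<k. real (K N) - real i) * (1 / real N) ^ k"
        by (simp add: prod_dividef power_one_over)
      finally show ?case .
    qed
  qed
  have q: "(\<lambda>N. (1 - 1 / real N) ^ k) \<longlonglongrightarrow> 1"
    using tendsto_power[OF tendsto_diff[OF tendsto_const inv0], of 1 k] by simp
  have Kinf: "eventually (\<lambda>N. K N \<ge> k) sequentially"
  proof -
    have "filterlim (\<lambda>N. real (K N) / real N * real N) at_top sequentially"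
      by (rule filterlim_tendsto_pos_mult_at_top[OF assms(1) bpos filterlim_real_sequentially])
    hence "eventually (\<lambda>N. real (K N) / real N * real N \<ge> real k) sequentially"
      by (simp add: filterlim_at_top)
    thus ?thesis
      using eventually_ge_at_top[of 1] by eventually_elim auto
  qed
  have lim: "(\<lambda>N. (\<Prod>i=0..<k. real (K N) - real i) * (1 / real N) ^ k / fact k *
      ((1 - 1 / real N) ^ K N / (1 - 1 / real N) ^ k)) \<longlonglongrightarrow> \<beta> ^ k / fact k * exp (- \<beta>)"
  proof -
    have "(\<lambda>N. (\<Prod>i=0..<k. real (K N) - real i) * (1 / real N) ^ k / fact k *
      ((1 - 1 / real N) ^ K N / (1 - 1 / real N) ^ k)) \<longlonglongrightarrow> \<beta> ^ k / fact k * (exp (- \<beta>) / 1)"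
      by (intro tendsto_intros p q pow_one_minus_inv_lim assms) auto
    thus ?thesis by simp
  qed
  show ?thesis
  proof (rule Lim_transform_eventually[OF lim])
    show "\<forall>\<^sub>F N in sequentially. (\<Prod>i=0..<k. real (K N) - real i) * (1 / real N) ^ k / fact k *
      ((1 - 1 / real N) ^ K N / (1 - 1 / real N) ^ k) =
      real (K N choose k) * (1 / real N) ^ k * (1 - 1 / real N) ^ (K N - k)"
      using Kinf eventually_ge_at_top[of 2]
    proof eventually_elim
      case (elim N)
      have nz: "1 - 1 / real N \<noteq> 0" using elim by (simp add: field_simps)
      show ?case using elim nz by (simp add: choose_real_prod power_diff)
    qed
  qed
qed

lemma binom_poisson_E:
  fixes K :: "nat \<Rightarrow> nat" and \<beta> B :: real and g :: "nat \<Rightarrow> real"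
  assumes lim: "(\<lambda>N. real (K N) / real N) \<longlonglongrightarrow> \<beta>" and bpos: "\<beta> > 0"
    and gb: "\<And>k. \<bar>g k\<bar> \<le> B * 2 ^ k"
  shows "(\<lambda>N. \<Sum>k\<le>K N. real (K N choose k) * (1 / real N) ^ k * (1 - 1 / real N) ^ (K N - k) * g k)
          \<longlonglongrightarrow> (\<Sum>k. \<beta> ^ k / fact k * exp (- \<beta>) * g k)"
proof -
  define R where "R = \<beta> + 1"
  define a where "a = (\<lambda>k N. real (K N choose k) * (1 / real N) ^ k * (1 - 1 / real N) ^ (K N - k) * g k)"
  define M where "M = (\<lambda>k. B * (inverse (fact k) * (2 * R) ^ k))"
  have B0: "B \<ge> 0" using gb[of 0] by simp
  have ev: "eventually (\<lambda>N. N \<ge> 1 \<and> real (K N) / real N \<le> R) sequentially"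
  proof -
    have "eventually (\<lambda>N. real (K N) / real N < R) sequentially"
      using lim unfolding R_def by (rule order_tendstoD) simp
    thus ?thesis using eventually_ge_at_top[of 1] by eventually_elim auto
  qed
  have R0: "R \<ge> 0" unfolding R_def using bpos by simp
  have bound: "norm (a k N) \<le> M k" if N: "N \<ge> 1" "real (K N) / real N \<le> R" for k N
  proof -
    have h1: "real (K N choose k) * (1 / real N) ^ k \<le> (real (K N) / real N) ^ k / fact k"
    proof -
      have "real (K N choose k) * (1 / real N) ^ k \<le> real (K N) ^ k / fact k * (1 / real N) ^ k"
        by (intro mult_right_mono choose_le_pow_fact) auto
      also have "\<dots> = (real (K N) / real N) ^ k / fact k" by (simp add: power_divide)
      finally show ?thesis .
    qed
    also have "\<dots> \<le> R ^ k / fact k"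
      by (intro divide_right_mono power_mono N) auto
    finally have h2: "real (K N choose k) * (1 / real N) ^ k \<le> R ^ k / fact k" .
    have h30: "0 \<le> 1 - 1 / real N" "1 - 1 / real N \<le> 1" using N by (auto simp: field_simps)
    have h3: "0 \<le> (1 - 1 / real N) ^ (K N - k)" "(1 - 1 / real N) ^ (K N - k) \<le> 1"
      using h30 by (auto intro!: power_le_one)
    have "norm (a k N) = real (K N choose k) * (1 / real N) ^ k * (1 - 1 / real N) ^ (K N - k) * \<bar>g k\<bar>"
      unfolding a_def using h3 by (simp add: abs_mult)
    also have "\<dots> \<le> R ^ k / fact k * 1 * (B * 2 ^ k)"
      by (intro mult_mono h2 h3 gb) (auto simp: R0)
    also have "\<dots> = M k" unfolding M_def by (simp add: power_mult_distrib field_simps)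
    finally show ?thesis .
  qed
  have T: "eventually (\<lambda>N. summable (\<lambda>k. norm (a k N))) sequentially \<and>
           summable (\<lambda>n. norm (\<beta> ^ n / fact n * exp (- \<beta>) * g n)) \<and>
           ((\<lambda>N. suminf (\<lambda>k. a k N)) \<longlongrightarrow> suminf (\<lambda>k. \<beta> ^ k / fact k * exp (- \<beta>) * g k)) sequentially"
  proof (rule tannerys_theorem)
    show "((\<lambda>N. a k N) \<longlongrightarrow> \<beta> ^ k / fact k * exp (- \<beta>) * g k) sequentially" for k
      unfolding a_def by (intro tendsto_intros binom_term_lim lim bpos)
    show "eventually (\<lambda>(k, N). norm (a k N) \<le> M k) (at_top \<times>\<^sub>F sequentially)"
      unfolding eventually_prod_filter
      by (rule exI[of _ "\<lambda>_. True"], rule exI[of _ "\<lambda>N. N \<ge> 1 \<and> real (K N) / real N \<le> R"])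
         (use ev bound in auto)
    show "summable M" unfolding M_def by (intro summable_mult summable_exp)
  qed simp
  have fin: "suminf (\<lambda>k. a k N) = (\<Sum>k\<le>K N. a k N)" for N
    by (rule suminf_finite) (auto simp: a_def binomial_eq_0)
  have fin': "(\<lambda>N. suminf (\<lambda>k. a k N)) = (\<lambda>N. \<Sum>k\<le>K N. a k N)" using fin by auto
  from T have "(\<lambda>N. suminf (\<lambda>k. a k N)) \<longlonglongrightarrow> (\<Sum>k. \<beta> ^ k / fact k * exp (- \<beta>) * g k)" by blast
  thus ?thesis unfolding fin' unfolding a_def .
qed



definition cnt :: "nat \<Rightarrow> (nat \<Rightarrow> nat \<times> real) \<Rightarrow> nat \<Rightarrow> nat" where
  "cnt K w i = card {k\<in>{..<K}. fst (w k) = i}"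

definition fL :: "real \<Rightarrow> nat \<Rightarrow> real" where
  "fL \<gamma> m = log 2 (1 + real m * \<gamma>)"

definition Phi :: "nat \<Rightarrow> nat \<Rightarrow> real \<Rightarrow> (nat \<Rightarrow> nat \<times> real) \<Rightarrow> real" where
  "Phi N K \<gamma> w = (\<Sum>i<N. fL \<gamma> (cnt K w i)) / real N"

lemma set_th_sample:
  assumes "N \<ge> 1"
  shows "set_pmf (th_sample_pmf N K) = PiE_dflt {..<K} (0, 1) (\<lambda>_. {..<N} \<times> {-1, 1})"
proof -
  have "0 \<in> {..<N}" using assms by simp
  hence ne: "{..<N} \<noteq> {}" by blast
  show ?thesis unfolding th_sample_pmf_def
    by (subst set_Pi_pmf) (auto simp: o_def set_pmf_of_set[OF ne])
qed

lemma finite_th_sample: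
  assumes "N \<ge> 1"
  shows "finite (set_pmf (th_sample_pmf N K))"
proof -
  have "0 \<in> {..<N}" using assms by simp
  hence ne: "{..<N} \<noteq> {}" by blast
  show ?thesis unfolding th_sample_pmf_def
    by (intro finite_set_Pi_pmf) (auto simp: set_pmf_of_set[OF ne])
qed

lemma C_opt_Phi:
  assumes N: "N \<ge> 1" and w: "w \<in> set_pmf (th_sample_pmf N K)" and g: "\<gamma> > 0"
  shows "C_opt N K \<gamma> w = Phi N K \<gamma> w"
proof -
  have wk: "fst (w k) < N \<and> (snd (w k) = -1 \<or> snd (w k) = 1)" if "k < K" for k
    using w that unfolding set_th_sample[OF N] PiE_dflt_def by auto
  define S where "S = th_matrix N K w"
  have Sc: "S \<in> carrier_mat N K" unfolding S_def th_matrix_def by simp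
  have SS: "(S * transpose_mat S) $$ (i, j) = (if i = j then real (cnt K w i) else 0)"
    if "i < N" "j < N" for i j
  proof -
    have "(S * transpose_mat S) $$ (i, j) =
        (\<Sum>k\<in>{0..<K}. (if i = fst (w k) then snd (w k) else 0) * (if j = fst (w k) then snd (w k) else 0))"
      using that Sc unfolding S_def by (simp add: th_matrix_def scalar_prod_def)
    also have "\<dots> = (\<Sum>k\<in>{0..<K}. if i = j \<and> fst (w k) = i then 1 else 0)"
    proof (intro sum.cong refl)
      fix k assume "k \<in> {0..<K}"
      hence "snd (w k) * snd (w k) = 1" using wk[of k] by auto
      thus "(if i = fst (w k) then snd (w k) else 0) * (if j = fst (w k) then snd (w k) else 0) =
            (if i = j \<and> fst (w k) = i then 1 else 0)" by auto
    qed
    also have "\<dots> = (if i = j then real (cnt K w i) else 0)"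
      by (auto simp: cnt_def sum.inter_filter[symmetric] atLeast0LessThan)
    finally show ?thesis .
  qed
  define A where "A = 1\<^sub>m N + \<gamma> \<cdot>\<^sub>m (S * transpose_mat S)"
  have Ac: "A \<in> carrier_mat N N" unfolding A_def using Sc by auto
  have Aij: "A $$ (i, j) = (if i = j then 1 + \<gamma> * real (cnt K w i) else 0)" if "i < N" "j < N" for i j
    unfolding A_def using that Sc SS by auto
  have ut: "upper_triangular A"
    unfolding upper_triangular_def using Ac Aij by auto
  have "det A = prod_list (diag_mat A)" by (rule det_upper_triangular[OF ut Ac])
  also have "\<dots> = (\<Prod>i\<in>{0..<N}. 1 + \<gamma> * real (cnt K w i))"
    unfolding diag_mat_def using Ac
    by (simp add: prod.distinct_set_conv_list[symmetric] Aij)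
  finally have detA: "det A = (\<Prod>i\<in>{0..<N}. 1 + \<gamma> * real (cnt K w i))" .
  have pos: "1 + \<gamma> * real (cnt K w i) > 0" for i using g by (simp add: add_pos_nonneg)
  have nz: "1 + \<gamma> * real (cnt K w i) \<noteq> 0" for i using pos[of i] by linarith
  have "log 2 (det A) = (\<Sum>i\<in>{0..<N}. log 2 (1 + \<gamma> * real (cnt K w i)))"
    unfolding detA log_def
    by (subst ln_prod) (auto simp: sum_divide_distrib nz)
  thus ?thesis
    unfolding C_opt_def Phi_def fL_def Let_def S_def[symmetric] A_def[symmetric]
    by (simp add: atLeast0LessThan mult.commute)
qed

lemma fL_mono: "\<gamma> > 0 \<Longrightarrow> a \<le> b \<Longrightarrow> fL \<gamma> a \<le> fL \<gamma> b"
  unfolding fL_def by (subst log_le_cancel_iff) (auto simp: add_pos_nonneg mult_right_mono)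

lemma fL_step: assumes g: "\<gamma> > 0" shows "fL \<gamma> (Suc b) - fL \<gamma> b \<le> log 2 (1 + \<gamma>)"
proof -
  have p1: "1 + real b * \<gamma> > 0" using g by (simp add: add_pos_nonneg)
  have "1 + real (Suc b) * \<gamma> \<le> (1 + \<gamma>) * (1 + real b * \<gamma>)"
    using g by (simp add: algebra_simps)
  hence "log 2 (1 + real (Suc b) * \<gamma>) \<le> log 2 ((1 + \<gamma>) * (1 + real b * \<gamma>))"
    using g p1 by (subst log_le_cancel_iff) (auto simp: add_pos_nonneg)
  also have "\<dots> = log 2 (1 + \<gamma>) + log 2 (1 + real b * \<gamma>)"
    using g p1 by (subst log_mult) auto
  finally show ?thesis unfolding fL_def by simp
qed

lemma fL_close:
  assumes g: "\<gamma> > 0" and "a \<le> b + 1" "b \<le> a + 1"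
  shows "\<bar>fL \<gamma> a - fL \<gamma> b\<bar> \<le> log 2 (1 + \<gamma>)"
proof -
  have L0: "log 2 (1 + \<gamma>) \<ge> 0" using g by simp
  consider "a = b" | "a = Suc b" | "b = Suc a" using assms by linarith
  thus ?thesis
  proof cases
    case 1 thus ?thesis using L0 by simp
  next
    case 2 thus ?thesis using fL_step[OF g, of b] fL_mono[OF g, of b a] by simp
  next
    case 3 thus ?thesis using fL_step[OF g, of a] fL_mono[OF g, of a b] by simp
  qed
qed

lemma card_le_plus1:
  assumes "finite B" "A - {k} \<subseteq> B"
  shows "card A \<le> card B + 1"
proof -
  have "A \<subseteq> insert k B" using assms by auto
  hence "card A \<le> card (insert k B)" using assms by (intro card_mono) auto
  also have "\<dots> \<le> card B + 1" using assms by (simp add: card_insert_if)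
  finally show ?thesis .
qed

lemma cnt_close:
  "cnt K (w(k:=y)) i \<le> cnt K w i + 1" "cnt K w i \<le> cnt K (w(k:=y)) i + 1"
  unfolding cnt_def by (rule card_le_plus1; auto)+

lemma cnt_same:
  "i \<noteq> fst (w k) \<Longrightarrow> i \<noteq> fst y \<Longrightarrow> cnt K (w(k:=y)) i = cnt K w i"
  unfolding cnt_def by (intro arg_cong[where f=card]) auto

lemma Phi_bd:
  assumes N: "N \<ge> 1" and g: "\<gamma> > 0"
  shows "\<bar>Phi N K \<gamma> (w(k:=y)) - Phi N K \<gamma> w\<bar> \<le> 2 * log 2 (1 + \<gamma>) / real N"
proof -
  define L where "L = log 2 (1 + \<gamma>)"
  have L0: "L \<ge> 0" unfolding L_def using g by simp
  define a where "a = fst (w k)"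
  define b where "b = fst y"
  have each: "\<bar>fL \<gamma> (cnt K (w(k:=y)) i) - fL \<gamma> (cnt K w i)\<bar> \<le>
       L * ((if i = a then 1 else 0) + (if i = b then 1 else 0))" for i
  proof (cases "i = a \<or> i = b")
    case True
    have "\<bar>fL \<gamma> (cnt K (w(k:=y)) i) - fL \<gamma> (cnt K w i)\<bar> \<le> L"
      unfolding L_def by (intro fL_close g cnt_close)
    also have "\<dots> \<le> L * ((if i = a then 1 else 0) + (if i = b then 1 else 0))"
      using True L0 by auto
    finally show ?thesis .
  next
    case False thus ?thesis using cnt_same[of i w k y K] by (simp add: a_def b_def)
  qed
  have e1: "\<bar>Phi N K \<gamma> (w(k:=y)) - Phi N K \<gamma> w\<bar> =
      \<bar>\<Sum>i<N. fL \<gamma> (cnt K (w(k:=y)) i) - fL \<gamma> (cnt K w i)\<bar> / real N"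
    unfolding Phi_def by (simp add: diff_divide_distrib[symmetric] sum_subtractf)
  have e2: "\<bar>\<Sum>i<N. fL \<gamma> (cnt K (w(k:=y)) i) - fL \<gamma> (cnt K w i)\<bar> \<le>
       (\<Sum>i<N. L * ((if i = a then 1 else 0) + (if i = b then 1 else 0)))"
    by (intro order.trans[OF sum_abs] sum_mono each)
  have e3: "(\<Sum>i<N. L * ((if i = a then 1 else 0) + (if i = b then 1 else 0))) =
      L * ((if a < N then 1 else 0) + (if b < N then 1 else 0))"
    by (simp add: sum_distrib_left[symmetric] sum.distrib)
  have e4: "L * ((if a < N then 1 else 0) + (if b < N then 1 else 0)) \<le> 2 * L" using L0 by auto
  have "\<bar>\<Sum>i<N. fL \<gamma> (cnt K (w(k:=y)) i) - fL \<gamma> (cnt K w i)\<bar> / real N \<le> 2 * L / real N"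
    using e2 e3 e4 by (intro divide_right_mono) auto
  thus ?thesis unfolding e1 L_def .
qed

lemma bern_map:
  assumes N: "N \<ge> 1" and i: "i < N"
  shows "map_pmf (\<lambda>a. a = i) (pmf_of_set {..<N}) = bernoulli_pmf (1 / real N)"
proof (rule pmf_eqI)
  have "0 \<in> {..<N}" using N by simp
  hence ne: "{..<N} \<noteq> {}" by blast
  fix b :: bool
  show "pmf (map_pmf (\<lambda>a. a = i) (pmf_of_set {..<N})) b = pmf (bernoulli_pmf (1 / real N)) b"
  proof (cases b)
    case True
    have "pmf (map_pmf (\<lambda>a. a = i) (pmf_of_set {..<N})) b = measure (pmf_of_set {..<N}) {i}"
      using True by (simp add: pmf_map vimage_def)
    also have "\<dots> = 1 / real N" using ne i by (simp add: measure_pmf_of_set)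
    finally show ?thesis using True N by simp
  next
    case False
    have "pmf (map_pmf (\<lambda>a. a = i) (pmf_of_set {..<N})) b = measure (pmf_of_set {..<N}) (- {i})"
      using False by (simp add: pmf_map vimage_def Compl_eq)
    also have "\<dots> = real (card ({..<N} - {i})) / real N"
      using ne by (simp add: measure_pmf_of_set Diff_eq)
    also have "\<dots> = (real N - 1) / real N" using i by (simp add: of_nat_diff)
    also have "\<dots> = 1 - 1 / real N" using N by (simp add: field_simps)
    finally show ?thesis using False N by simp
  qed
qed

lemma cnt_binomial:
  assumes N: "N \<ge> 1" and i: "i < N"
  shows "map_pmf (\<lambda>w. cnt K w i) (th_sample_pmf N K) = binomial_pmf K (1 / real N)"
proof -
  define P where "P = pair_pmf (pmf_of_set {..<N}) (pmf_of_set {-1, 1::real})"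
  define f where "f = (\<lambda>z::nat \<times> real. fst z = i)"
  have mP: "map_pmf f P = bernoulli_pmf (1 / real N)"
    unfolding P_def f_def
    by (subst pmf.map_comp[symmetric, of "\<lambda>a. a = i" fst, unfolded o_def])
       (simp add: map_fst_pair_pmf bern_map[OF N i])
  have "binomial_pmf K (1 / real N) =
     map_pmf (\<lambda>h. card {x\<in>{..<K}. h x}) (Pi_pmf {..<K} (f (0, 1)) (\<lambda>_. bernoulli_pmf (1 / real N)))"
    using N by (intro binomial_pmf_altdef') auto
  also have "Pi_pmf {..<K} (f (0, 1)) (\<lambda>_. bernoulli_pmf (1 / real N)) =
      Pi_pmf {..<K} (f (0, 1)) (\<lambda>_. map_pmf f P)" by (simp add: mP)
  also have "\<dots> = map_pmf (\<lambda>h. f \<circ> h) (Pi_pmf {..<K} (0, 1) (\<lambda>_. P))"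
    by (rule Pi_pmf_map) auto
  also have "map_pmf (\<lambda>h. card {x\<in>{..<K}. h x}) \<dots> = map_pmf (\<lambda>w. cnt K w i) (th_sample_pmf N K)"
    unfolding th_sample_pmf_def P_def pmf.map_comp by (simp add: o_def cnt_def f_def)
  finally show ?thesis ..
qed

lemma E_Phi:
  assumes N: "N \<ge> 1"
  shows "measure_pmf.expectation (th_sample_pmf N K) (Phi N K \<gamma>) =
    (\<Sum>k\<le>K. real (K choose k) * (1 / real N) ^ k * (1 - 1 / real N) ^ (K - k) * fL \<gamma> k)"
proof -
  define M where "M = th_sample_pmf N K"
  have fin: "finite (set_pmf M)" unfolding M_def by (rule finite_th_sample[OF N])
  define B where "B = (\<Sum>k\<le>K. real (K choose k) * (1 / real N) ^ k * (1 - 1 / real N) ^ (K - k) * fL \<gamma> k)"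
  have each: "measure_pmf.expectation M (\<lambda>w. fL \<gamma> (cnt K w i)) = B" if "i < N" for i
  proof -
    have "measure_pmf.expectation M (\<lambda>w. fL \<gamma> (cnt K w i)) =
        measure_pmf.expectation (map_pmf (\<lambda>w. cnt K w i) M) (fL \<gamma>)" by simp
    also have "\<dots> = measure_pmf.expectation (binomial_pmf K (1 / real N)) (fL \<gamma>)"
      unfolding M_def by (simp add: cnt_binomial[OF N that])
    also have "\<dots> = B" unfolding B_def using N by (subst expectation_binomial_pmf') auto
    finally show ?thesis .
  qed
  have "measure_pmf.expectation M (Phi N K \<gamma>) =
      (\<Sum>i<N. measure_pmf.expectation M (\<lambda>w. fL \<gamma> (cnt K w i))) / real N"
  proof -
    have "measure_pmf.expectation M (Phi N K \<gamma>) =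
        (\<Sum>s\<in>set_pmf M. pmf M s * ((\<Sum>i<N. fL \<gamma> (cnt K s i)) / real N))"
      unfolding Phi_def E_fin[OF fin] ..
    also have "\<dots> = (\<Sum>s\<in>set_pmf M. \<Sum>i<N. pmf M s * fL \<gamma> (cnt K s i) / real N)"
      by (simp add: sum_divide_distrib sum_distrib_left)
    also have "\<dots> = (\<Sum>i<N. \<Sum>s\<in>set_pmf M. pmf M s * fL \<gamma> (cnt K s i) / real N)"
      by (rule sum.swap)
    also have "\<dots> = (\<Sum>i<N. \<Sum>s\<in>set_pmf M. pmf M s * fL \<gamma> (cnt K s i)) / real N"
      by (simp add: sum_divide_distrib)
    also have "\<dots> = (\<Sum>i<N. measure_pmf.expectation M (\<lambda>w. fL \<gamma> (cnt K w i))) / real N"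
      using fin by (simp add: E_fin)
    finally show ?thesis .
  qed
  also have "\<dots> = (\<Sum>i<N. B) / real N" by (simp add: each)
  also have "\<dots> = B" using N by simp
  finally show ?thesis unfolding M_def B_def .
qed



lemma fL_le: assumes g: "\<gamma> > 0" shows "fL \<gamma> k \<le> real k * log 2 (1 + \<gamma>)"
proof (induction k)
  case 0 thus ?case by (simp add: fL_def)
next
  case (Suc k) thus ?case using fL_step[OF g, of k] by (simp add: algebra_simps)
qed

lemma fL_nonneg: "\<gamma> > 0 \<Longrightarrow> fL \<gamma> k \<ge> 0"
  unfolding fL_def by (simp add: add_pos_nonneg)

lemma fL_bound: assumes g: "\<gamma> > 0" shows "\<bar>fL \<gamma> k\<bar> \<le> log 2 (1 + \<gamma>) * 2 ^ k"
proof -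
  have L0: "log 2 (1 + \<gamma>) \<ge> 0" using g by simp
  have "real k \<le> 2 ^ k" using less_exp[of k] by (simp add: of_nat_less_numeral_power_cancel_iff less_imp_le)
  hence "real k * log 2 (1 + \<gamma>) \<le> 2 ^ k * log 2 (1 + \<gamma>)" using L0 by (intro mult_right_mono) auto
  thus ?thesis using fL_le[OF g, of k] fL_nonneg[OF g, of k] by (simp add: mult.commute)
qed


lemma cheb:
  fixes M :: "'a pmf" and f :: "'a \<Rightarrow> real"
  assumes "finite (set_pmf M)" "a > 0"
  shows "measure_pmf.prob M {x. \<bar>f x - measure_pmf.expectation M f\<bar> \<ge> a} \<le>
     measure_pmf.expectation M (\<lambda>x. (f x - measure_pmf.expectation M f)^2) / a^2"
  using measure_pmf.Chebyshev_inequality[where M=M and f=f and a=a] assms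
  by (simp add: integrable_measure_pmf_finite)

theorem mainTheorem5:
  fixes \<beta> \<gamma> :: real and K :: "nat \<Rightarrow> nat"
  assumes "\<beta> > 0" and "\<gamma> > 0"
    and "\<And>N. N \<ge> 1 \<Longrightarrow> K N > 0"
    and "(\<lambda>N. real (K N) / real N) \<longlonglongrightarrow> \<beta>"
  shows "\<forall>e>0. (\<lambda>N. measure_pmf.prob (th_sample_pmf N (K N))
            {\<omega>. \<bar>C_opt N (K N) \<gamma> \<omega> -
                 (\<Sum>k. \<beta> ^ k * exp (- \<beta>) / fact k * log 2 (1 + real k * \<gamma>))\<bar> > e})
          \<longlonglongrightarrow> 0"
proof (intro allI impI)
  fix e :: real assume e: "e > 0"
  note bpos = assms(1) and g = assms(2) and lim = assms(4)
  define L where "L = log 2 (1 + \<gamma>)"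
  define \<mu> where "\<mu> = (\<Sum>k. \<beta> ^ k * exp (- \<beta>) / fact k * log 2 (1 + real k * \<gamma>))"
  define EN where "EN = (\<lambda>N. \<Sum>k\<le>K N. real (K N choose k) * (1 / real N) ^ k * (1 - 1 / real N) ^ (K N - k) * fL \<gamma> k)"
  have ENlim: "EN \<longlonglongrightarrow> \<mu>"
  proof -
    have "EN \<longlonglongrightarrow> (\<Sum>k. \<beta> ^ k / fact k * exp (- \<beta>) * fL \<gamma> k)"
      unfolding EN_def by (rule binom_poisson_E[OF lim bpos fL_bound[OF g]])
    moreover have "(\<Sum>k. \<beta> ^ k / fact k * exp (- \<beta>) * fL \<gamma> k) = \<mu>"
      unfolding \<mu>_def fL_def by (simp add: mult.commute mult.left_commute)
    ultimately show ?thesis by simp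
  qed
  define u where "u = (\<lambda>N. real (K N) * (2 * L / real N)^2 / (e/2)^2)"
  have ulim: "u \<longlonglongrightarrow> 0"
  proof -
    have "(\<lambda>N. 16 * L^2 / e^2 * (real (K N) / real N) * (1 / real N)) \<longlonglongrightarrow> 16 * L^2 / e^2 * \<beta> * 0"
      by (intro tendsto_intros lim)
    moreover have "(\<lambda>N. 16 * L^2 / e^2 * (real (K N) / real N) * (1 / real N)) = u"
      unfolding u_def by (auto simp: fun_eq_iff power2_eq_square field_simps)
    ultimately show ?thesis by simp
  qed
  have ev: "eventually (\<lambda>N. N \<ge> 1 \<and> \<bar>EN N - \<mu>\<bar> < e / 2) sequentially"
  proof -
    have "eventually (\<lambda>N. dist (EN N) \<mu> < e / 2) sequentially"
      using ENlim e unfolding tendsto_iff by (meson half_gt_zero)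
    thus ?thesis using eventually_ge_at_top[of 1] by eventually_elim (auto simp: dist_real_def)
  qed
  show "(\<lambda>N. measure_pmf.prob (th_sample_pmf N (K N))
            {\<omega>. \<bar>C_opt N (K N) \<gamma> \<omega> - \<mu>\<bar> > e}) \<longlonglongrightarrow> 0"
  proof (rule tendsto_sandwich[OF _ _ tendsto_const ulim])
    show "eventually (\<lambda>N. 0 \<le> measure_pmf.prob (th_sample_pmf N (K N))
            {\<omega>. \<bar>C_opt N (K N) \<gamma> \<omega> - \<mu>\<bar> > e}) sequentially" by simp
    show "eventually (\<lambda>N. measure_pmf.prob (th_sample_pmf N (K N))
            {\<omega>. \<bar>C_opt N (K N) \<gamma> \<omega> - \<mu>\<bar> > e} \<le> u N) sequentially"
      using ev
    proof eventually_elim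
      case (elim N)
      hence N: "N \<ge> 1" and close: "\<bar>EN N - \<mu>\<bar> < e / 2" by auto
      define M where "M = th_sample_pmf N (K N)"
      have fin: "finite (set_pmf M)" unfolding M_def by (rule finite_th_sample[OF N])
      have EM: "measure_pmf.expectation M (Phi N (K N) \<gamma>) = EN N"
        unfolding M_def EN_def by (rule E_Phi[OF N])
      have sub: "{w. \<bar>C_opt N (K N) \<gamma> w - \<mu>\<bar> > e} \<inter> set_pmf M \<subseteq>
          {w. \<bar>Phi N (K N) \<gamma> w - measure_pmf.expectation M (Phi N (K N) \<gamma>)\<bar> \<ge> e / 2}"
      proof
        fix w assume w: "w \<in> {w. \<bar>C_opt N (K N) \<gamma> w - \<mu>\<bar> > e} \<inter> set_pmf M"
        hence "C_opt N (K N) \<gamma> w = Phi N (K N) \<gamma> w"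
          unfolding M_def using C_opt_Phi[OF N _ g] by blast
        with w have c1: "\<bar>Phi N (K N) \<gamma> w - \<mu>\<bar> > e" by auto
        have "\<bar>Phi N (K N) \<gamma> w - \<mu>\<bar> \<le> \<bar>Phi N (K N) \<gamma> w - EN N\<bar> + \<bar>EN N - \<mu>\<bar>"
          using abs_triangle_ineq[of "Phi N (K N) \<gamma> w - EN N" "EN N - \<mu>"] by simp
        with c1 close have "\<bar>Phi N (K N) \<gamma> w - EN N\<bar> \<ge> e / 2" by linarith
        thus "w \<in> {w. \<bar>Phi N (K N) \<gamma> w - measure_pmf.expectation M (Phi N (K N) \<gamma>)\<bar> \<ge> e / 2}"
          unfolding EM by simp
      qed
      have "measure_pmf.prob M {w. \<bar>C_opt N (K N) \<gamma> w - \<mu>\<bar> > e}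
          = measure_pmf.prob M ({w. \<bar>C_opt N (K N) \<gamma> w - \<mu>\<bar> > e} \<inter> set_pmf M)"
        by (simp add: measure_Int_set_pmf)
      also have "\<dots> \<le> measure_pmf.prob M
          {w. \<bar>Phi N (K N) \<gamma> w - measure_pmf.expectation M (Phi N (K N) \<gamma>)\<bar> \<ge> e / 2}"
        by (rule measure_pmf.finite_measure_mono[OF sub]) simp
      also have "\<dots> \<le> measure_pmf.expectation M
          (\<lambda>x. (Phi N (K N) \<gamma> x - measure_pmf.expectation M (Phi N (K N) \<gamma>))^2) / (e/2)^2"
        by (rule cheb[OF fin]) (use e in simp)
      also have "\<dots> \<le> real (card {..<K N}) * (2 * L / real N)^2 / (e/2)^2"
      proof (intro divide_right_mono)
        show "measure_pmf.expectation M
          (\<lambda>x. (Phi N (K N) \<gamma> x - measure_pmf.expectation M (Phi N (K N) \<gamma>))^2)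
          \<le> real (card {..<K N}) * (2 * L / real N)^2"
          unfolding M_def th_sample_pmf_def
        proof (rule bd_var)
          have "0 \<in> {..<N}" using N by simp
          hence ne: "{..<N} \<noteq> {}" by blast
          show "finite (set_pmf (pair_pmf (pmf_of_set {..<N}) (pmf_of_set {-1, 1::real})))" for x :: nat
            by (simp add: set_pmf_of_set[OF ne])
          show "\<bar>Phi N (K N) \<gamma> (w(k := y)) - Phi N (K N) \<gamma> w\<bar> \<le> 2 * L / real N" for w k y
            unfolding L_def by (rule Phi_bd[OF N g])
        qed simp
      qed simp
      also have "\<dots> = u N" unfolding u_def by simp
      finally show ?case unfolding M_def .
    qed
  qed
qed


end
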